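(* Let $(d,p)\in\{(6,1),(10,2),(13,3),(14,3),(17,4)\}$. Then the function $\varphi$ has a unique maximum on $K$, and it is attained at the point $\mathbf{z}^*$, which lies in the interior of $K$.
   Context: Let $\tau_j=\binom{d}{p}\binom{p}{j}\binom{d-p}{p-j}$ for $0\le j\le p$. Points of $\mathbb{R}^{4p+1}$ are written $\mathbf{z}=(z,(z_{j00},z_{j01},z_{j10},z_{j11})_{j\in[p]})$, and we set $z_{0\alpha\alpha}=z-\sum_{j\in[p]}z_{j\alpha\alpha}$ for $\alpha\in\{0,1\}$ and $z_{0\alpha\beta}=\frac12-z-\sum_{j\in[p]}z_{j\alpha\beta}$ for $\alpha\ne\beta$. Let $K\subset\mathbb{R}^{4p+1}$ be the set of $\mathbf{z}$ with $0\le z\le\frac12$ and $z_{j\alpha\beta}\ge0$ for all $0\le j\le p$, $\alpha,\beta\in\{0,1\}$. Define $A(\mathbf{z})=p+(d-4p)z+\sum_{j\in[p]}j(z_{j00}+z_{j11}-z_{j01}-z_{j10})$, $B(\mathbf{z})=\frac d2-A(\mathbf{z})$, and $$\varphi(\mathbf{z})=A\log A+B\log B+\sum_{\substack{0\le j\le p\\ \alpha,\beta\in\{0,1\}}}\bigl(z_{j\alpha\beta}\log\tau_j-z_{j\alpha\beta}\log z_{j\alpha\beta}\bigr),$$ with the convention $0\log0=0$ (so $\varphi$ is continuous on $K$). The point $\mathbf{z}^*$ has $z^*=\frac14$ and $z^*_{j\alpha\beta}=\frac{\tau_j}{4\binom{d}{p}^2}$ for all $j\in[p]$, $\alpha,\beta\in\{0,1\}$.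 *)

theory Defs
  imports "HOL-Analysis.Analysis"
begin

text \<open>A point of R^(4p+1) is a pair (z, w) with w j a b = z_{j a b} for j in {1..p},
  a, b :: bool (False = 0, True = 1), and w j a b = 0 for j outside {1..p}.\<close>

type_synonym pt = "real \<times> (nat \<Rightarrow> bool \<Rightarrow> bool \<Rightarrow> real)"

definition pts :: "nat \<Rightarrow> pt set" where
  "pts p = {(z, w). \<forall>j a b. j \<notin> {1..p} \<longrightarrow> w j a b = 0}"

definition tau :: "nat \<Rightarrow> nat \<Rightarrow> nat \<Rightarrow> real" where
  "tau d p j = real ((d choose p) * (p choose j) * ((d - p) choose (p - j)))"

definition zc :: "nat \<Rightarrow> pt \<Rightarrow> nat \<Rightarrow> bool \<Rightarrow> bool \<Rightarrow> real" where
  "zc p x j a b =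
     (if j = 0 then
        (if a = b then fst x - (\<Sum>i\<in>{1..p}. snd x i a b)
         else 1/2 - fst x - (\<Sum>i\<in>{1..p}. snd x i a b))
      else snd x j a b)"

definition Kset :: "nat \<Rightarrow> pt set" where
  "Kset p = {x \<in> pts p. 0 \<le> fst x \<and> fst x \<le> 1/2 \<and>
              (\<forall>j\<in>{0..p}. \<forall>a b. 0 \<le> zc p x j a b)}"

definition xlogx :: "real \<Rightarrow> real" where
  "xlogx t = (if t = 0 then 0 else t * ln t)"

definition Af :: "nat \<Rightarrow> nat \<Rightarrow> pt \<Rightarrow> real" where
  "Af d p x = real p + (real d - 4 * real p) * fst x +
     (\<Sum>j\<in>{1..p}. real j * (snd x j False False + snd x j True True
                              - snd x j False True - snd x j True False))"

definition Bf :: "nat \<Rightarrow> nat \<Rightarrow> pt \<Rightarrow> real" where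
  "Bf d p x = real d / 2 - Af d p x"

definition phi :: "nat \<Rightarrow> nat \<Rightarrow> pt \<Rightarrow> real" where
  "phi d p x = xlogx (Af d p x) + xlogx (Bf d p x) +
     (\<Sum>j\<in>{0..p}. \<Sum>a\<in>UNIV. \<Sum>b\<in>UNIV.
        zc p x j a b * ln (tau d p j) - xlogx (zc p x j a b))"

definition zstar :: "nat \<Rightarrow> nat \<Rightarrow> pt" where
  "zstar d p = (1/4, \<lambda>j a b. if j \<in> {1..p}
                  then tau d p j / (4 * real (d choose p) ^ 2) else 0)"

text \<open>Interior of S within R^(4p+1) (coordinates z and z_{j a b}, j in 1..p),
  via (sup-norm) open balls.\<close>
definition interior_pt :: "nat \<Rightarrow> pt set \<Rightarrow> pt set" where
  "interior_pt p S = {x \<in> pts p. \<exists>e>0. \<forall>y\<in>pts p.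
      (\<bar>fst y - fst x\<bar> < e \<and> (\<forall>j\<in>{1..p}. \<forall>a b. \<bar>snd y j a b - snd x j a b\<bar> < e))
      \<longrightarrow> y \<in> S}"

end

theory Submission
  imports Defs
begin


definition cc :: "nat \<Rightarrow> nat \<Rightarrow> nat \<Rightarrow> bool \<Rightarrow> bool \<Rightarrow> real" where
  "cc d p j a b = (if a = b then real j + real d / 2 - real p else real p - real j)"

definition ytot :: "nat \<Rightarrow> nat \<Rightarrow> real \<Rightarrow> real" where
  "ytot d p l = (\<Sum>j\<in>{0..p}. \<Sum>a\<in>UNIV. \<Sum>b\<in>UNIV. tau d p j * exp (l * cc d p j a b))"

definition Sp :: "nat \<Rightarrow> nat \<Rightarrow> real \<Rightarrow> real" where
  "Sp d p u = (\<Sum>j\<in>{0..p}. tau d p j * (2 * u^(2*j+d-2*p) + 2 * u^(2*p-2*j)))"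

lemma sum_bool: "(\<Sum>a\<in>(UNIV::bool set). f a) = f False + f True"
  by (simp add: UNIV_bool)

lemma trip_bool: fixes f :: "nat \<Rightarrow> bool \<Rightarrow> bool \<Rightarrow> real" shows "(\<Sum>j\<in>J. \<Sum>a\<in>UNIV. \<Sum>b\<in>UNIV. f j a b) =
   (\<Sum>j\<in>J. f j False False) + (\<Sum>j\<in>J. f j False True) + (\<Sum>j\<in>J. f j True False) + (\<Sum>j\<in>J. f j True True)"
  by (simp add: sum_bool sum.distrib ac_simps)

lemma trip_prod: "(\<Sum>j\<in>J. \<Sum>a\<in>UNIV. \<Sum>b\<in>UNIV. f j a b) = (\<Sum>(j,a,b)\<in>J\<times>UNIV\<times>UNIV. f j a b)"
  by (simp add: sum.cartesian_product)

lemma zc_sum: "(\<Sum>j\<in>{0..p}. zc p x j a b) = (if a = b then fst x else 1/2 - fst x)"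
proof -
  have "(\<Sum>j\<in>{0..p}. zc p x j a b) = zc p x 0 a b + (\<Sum>j\<in>{1..p}. zc p x j a b)"
    by (simp add: sum.atLeast_Suc_atMost)
  also have "(\<Sum>j\<in>{1..p}. zc p x j a b) = (\<Sum>j\<in>{1..p}. snd x j a b)"
    by (rule sum.cong) (auto simp: zc_def)
  finally show ?thesis by (simp add: zc_def)
qed

lemma zcj_sum: "(\<Sum>j\<in>{0..p}. real j * zc p x j a b) = (\<Sum>j\<in>{1..p}. real j * snd x j a b)"
proof -
  have "(\<Sum>j\<in>{0..p}. real j * zc p x j a b) = 0 + (\<Sum>j\<in>{1..p}. real j * zc p x j a b)"
    by (simp add: sum.atLeast_Suc_atMost)
  also have "(\<Sum>j\<in>{1..p}. real j * zc p x j a b) = (\<Sum>j\<in>{1..p}. real j * snd x j a b)"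
    by (rule sum.cong) (auto simp: zc_def)
  finally show ?thesis by simp
qed

lemma zc_total: "(\<Sum>j\<in>{0..p}. \<Sum>a\<in>UNIV. \<Sum>b\<in>UNIV. zc p x j a b) = 1"
  by (simp add: trip_bool zc_sum)

lemma cc_sum: "(\<Sum>j\<in>{0..p}. cc d p j a b * zc p x j a b) =
  (if a = b then (real d/2 - real p) * (\<Sum>j\<in>{0..p}. zc p x j a b) + (\<Sum>j\<in>{0..p}. real j * zc p x j a b)
   else real p * (\<Sum>j\<in>{0..p}. zc p x j a b) - (\<Sum>j\<in>{0..p}. real j * zc p x j a b))"
  by (auto simp: cc_def sum_distrib_left sum.distrib sum_subtractf algebra_simps)

lemma Af_alt: "Af d p x = real p + (real d - 4 * real p) * fst x +
   ((\<Sum>j\<in>{1..p}. real j * snd x j False False) + (\<Sum>j\<in>{1..p}. real j * snd x j True True)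
   - (\<Sum>j\<in>{1..p}. real j * snd x j False True) - (\<Sum>j\<in>{1..p}. real j * snd x j True False))"
  unfolding Af_def by (simp add: algebra_simps sum.distrib sum_subtractf)

lemma A_eq: "(\<Sum>j\<in>{0..p}. \<Sum>a\<in>UNIV. \<Sum>b\<in>UNIV. cc d p j a b * zc p x j a b) = Af d p x"
  unfolding trip_bool cc_sum zc_sum zcj_sum Af_alt by (simp add: algebra_simps)

lemma gterm:
  fixes q y S :: real
  assumes "0 \<le> q" "0 < y" "0 < S"
  shows "q * ln y - xlogx q \<le> q * ln S + y / S - q"
    and "q \<noteq> y / S \<Longrightarrow> q * ln y - xlogx q < q * ln S + y / S - q"
proof -
  have main: "q * ln y - xlogx q \<le> q * ln S + y / S - q \<and>
      (q \<noteq> y / S \<longrightarrow> q * ln y - xlogx q < q * ln S + y / S - q)"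
  proof (cases "q = 0")
    case True
    then show ?thesis using assms by (simp add: xlogx_def)
  next
    case False
    then have q: "0 < q" using assms by simp
    define t where "t = y / (q * S)"
    have t: "0 < t" using q assms by (simp add: t_def)
    have e1: "q * ln y - xlogx q - q * ln S = q * ln t"
      using q assms False by (simp add: xlogx_def t_def ln_div ln_mult algebra_simps)
    have e2: "q * (t - 1) = y / S - q" using q assms by (simp add: t_def field_simps)
    have l1: "ln t \<le> t - 1" using ln_le_minus_one t by blast
    have l2: "t \<noteq> 1 \<Longrightarrow> ln t < t - 1" using ln_eq_minus_one[OF t] l1 by fastforce
    have "q \<noteq> y / S \<Longrightarrow> t \<noteq> 1" using q assms by (auto simp: t_def field_simps)
    then show ?thesis using l1 l2 e1 e2 q
      by (smt (verit, best) mult_left_mono mult_strict_left_mono)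
  qed
  then show "q * ln y - xlogx q \<le> q * ln S + y / S - q"
    and "q \<noteq> y / S \<Longrightarrow> q * ln y - xlogx q < q * ln S + y / S - q" by auto
qed


lemma tau_pos: "j \<le> p \<Longrightarrow> 2*p \<le> d \<Longrightarrow> 0 < tau d p j"
  unfolding tau_def by (simp add: zero_less_binomial_iff)

lemma tau_ge: "j \<le> p \<Longrightarrow> 2*p \<le> d \<Longrightarrow> real (d choose p) \<le> tau d p j"
proof -
  assume a: "j \<le> p" "2*p \<le> d"
  have "1 \<le> (p choose j) * ((d - p) choose (p - j))"
    using a by (simp add: zero_less_binomial_iff Suc_le_eq)
  then have "(d choose p) * 1 \<le> (d choose p) * ((p choose j) * ((d - p) choose (p - j)))"
    by (rule mult_le_mono2)
  then show ?thesis unfolding tau_def by (simp add: mult.assoc del: of_nat_mult)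
qed

lemma tau_sum: "2*p \<le> d \<Longrightarrow> (\<Sum>j\<in>{0..p}. tau d p j) = real (d choose p)^2"
proof -
  assume a: "2*p \<le> d"
  have v: "(\<Sum>k\<le>p. (p choose k) * ((d - p) choose (p - k))) = d choose p"
    using vandermonde[of p "d - p" p] a by simp
  have "(\<Sum>j\<in>{0..p}. tau d p j) = real (d choose p) * real (\<Sum>k\<le>p. (p choose k) * ((d - p) choose (p - k)))"
    unfolding tau_def by (simp add: atLeast0AtMost sum_distrib_left mult.assoc)
  then show ?thesis using v by (simp add: power2_eq_square)
qed

lemma phi_bound:
  assumes dp: "2*p \<le> d" and x: "x \<in> Kset p"
  shows "phi d p x \<le> xlogx (Af d p x) + xlogx (Bf d p x) - l * Af d p x + ln (ytot d p l)"
    and "(\<exists>j\<in>{0..p}. \<exists>a b. zc p x j a b \<noteq> tau d p j * exp (l * cc d p j a b) / ytot d p l) \<Longrightarrow>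
         phi d p x < xlogx (Af d p x) + xlogx (Bf d p x) - l * Af d p x + ln (ytot d p l)"
proof -
  define Y where "Y = ytot d p l"
  define I where "I = {0..p} \<times> (UNIV::bool set) \<times> (UNIV::bool set)"
  have finI: "finite I" by (simp add: I_def)
  have Ine: "I \<noteq> {}" by (auto simp: I_def)
  have tpos: "\<And>j. j \<in> {0..p} \<Longrightarrow> 0 < tau d p j" using tau_pos dp by auto
  have Ysum: "Y = (\<Sum>(j,a,b)\<in>I. tau d p j * exp (l * cc d p j a b))"
    by (simp add: Y_def ytot_def trip_prod I_def)
  have Ypos: "0 < Y" unfolding Ysum
    by (rule sum_pos[OF finI Ine]) (auto simp: I_def intro!: mult_pos_pos tpos)
  have zpos: "\<And>j a b. j \<in> {0..p} \<Longrightarrow> 0 \<le> zc p x j a b" using x by (auto simp: Kset_def)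
  define f where "f = (\<lambda>j a b. zc p x j a b * ln (tau d p j) - xlogx (zc p x j a b))"
  define g where "g = (\<lambda>j a b. ln Y * zc p x j a b - l * (cc d p j a b * zc p x j a b)
      + tau d p j * exp (l * cc d p j a b) / Y - zc p x j a b)"
  have fg: "f j a b \<le> g j a b"
    and fgs: "zc p x j a b \<noteq> tau d p j * exp (l * cc d p j a b) / Y \<Longrightarrow> f j a b < g j a b"
    if j: "j \<in> {0..p}" for j a b
  proof -
    have y: "0 < tau d p j * exp (l * cc d p j a b)" using tpos[OF j] by simp
    have ly: "ln (tau d p j * exp (l * cc d p j a b)) = ln (tau d p j) + l * cc d p j a b"
      using tpos[OF j] by (simp add: ln_mult)
    have e: "g j a b = zc p x j a b * ln Y + tau d p j * exp (l * cc d p j a b) / Y - zc p x j a b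
        - l * cc d p j a b * zc p x j a b" unfolding g_def by (simp add: algebra_simps)
    have e2: "f j a b = zc p x j a b * ln (tau d p j * exp (l * cc d p j a b)) - xlogx (zc p x j a b)
        - l * cc d p j a b * zc p x j a b" unfolding f_def ly by (simp add: algebra_simps)
    show "f j a b \<le> g j a b" unfolding e e2 using gterm(1)[OF zpos[of j a b, OF j] y Ypos] by linarith
    show "zc p x j a b \<noteq> tau d p j * exp (l * cc d p j a b) / Y \<Longrightarrow> f j a b < g j a b"
      unfolding e e2 using gterm(2)[OF zpos[of j a b, OF j] y Ypos] by linarith
  qed
  have sumg: "(\<Sum>j\<in>{0..p}. \<Sum>a\<in>UNIV. \<Sum>b\<in>UNIV. g j a b) = ln Y - l * Af d p x"
  proof -
    have "(\<Sum>j\<in>{0..p}. \<Sum>a\<in>UNIV. \<Sum>b\<in>UNIV. g j a b) =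
      ln Y * (\<Sum>j\<in>{0..p}. \<Sum>a\<in>UNIV. \<Sum>b\<in>UNIV. zc p x j a b)
      - l * (\<Sum>j\<in>{0..p}. \<Sum>a\<in>UNIV. \<Sum>b\<in>UNIV. cc d p j a b * zc p x j a b)
      + (\<Sum>j\<in>{0..p}. \<Sum>a\<in>UNIV. \<Sum>b\<in>UNIV. tau d p j * exp (l * cc d p j a b)) / Y
      - (\<Sum>j\<in>{0..p}. \<Sum>a\<in>UNIV. \<Sum>b\<in>UNIV. zc p x j a b)"
      unfolding g_def by (simp add: sum.distrib sum_subtractf sum_distrib_left sum_divide_distrib)
    also have "\<dots> = ln Y - l * Af d p x" 
      unfolding zc_total A_eq using Ypos by (simp add: Y_def[symmetric] ytot_def[symmetric])
    finally show ?thesis .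
  qed
  have phix: "phi d p x = xlogx (Af d p x) + xlogx (Bf d p x) + (\<Sum>j\<in>{0..p}. \<Sum>a\<in>UNIV. \<Sum>b\<in>UNIV. f j a b)"
    unfolding phi_def f_def ..
  have F1: "(\<Sum>j\<in>{0..p}. \<Sum>a\<in>UNIV. \<Sum>b\<in>UNIV. f j a b) \<le> (\<Sum>j\<in>{0..p}. \<Sum>a\<in>UNIV. \<Sum>b\<in>UNIV. g j a b)"
    unfolding trip_prod I_def[symmetric]
    by (rule sum_mono) (auto simp: I_def intro: fg)
  show "phi d p x \<le> xlogx (Af d p x) + xlogx (Bf d p x) - l * Af d p x + ln (ytot d p l)"
    using F1 sumg phix unfolding Y_def by linarith
  assume "\<exists>j\<in>{0..p}. \<exists>a b. zc p x j a b \<noteq> tau d p j * exp (l * cc d p j a b) / ytot d p l"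
  then obtain j0 a0 b0 where j0: "j0 \<in> {0..p}" and ne: "zc p x j0 a0 b0 \<noteq> tau d p j0 * exp (l * cc d p j0 a0 b0) / Y"
    by (auto simp: Y_def)
  have F2: "(\<Sum>j\<in>{0..p}. \<Sum>a\<in>UNIV. \<Sum>b\<in>UNIV. f j a b) < (\<Sum>j\<in>{0..p}. \<Sum>a\<in>UNIV. \<Sum>b\<in>UNIV. g j a b)"
    unfolding trip_prod I_def[symmetric]
  proof (rule sum_strict_mono_ex1[OF finI])
    show "\<forall>i\<in>I. (case i of (j, a, b) \<Rightarrow> f j a b) \<le> (case i of (j, a, b) \<Rightarrow> g j a b)"
      by (auto simp: I_def intro: fg)
    show "\<exists>i\<in>I. (case i of (j, a, b) \<Rightarrow> f j a b) < (case i of (j, a, b) \<Rightarrow> g j a b)"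
      using j0 ne fgs by (intro bexI[of _ "(j0,a0,b0)"]) (auto simp: I_def)
  qed
  show "phi d p x < xlogx (Af d p x) + xlogx (Bf d p x) - l * Af d p x + ln (ytot d p l)"
    using F2 sumg phix unfolding Y_def by linarith
qed


lemma Dpos: "2*p \<le> d \<Longrightarrow> 0 < real (d choose p)"
  by (simp add: zero_less_binomial_iff)

lemma ytot_pos: "2*p \<le> d \<Longrightarrow> 0 < ytot d p l"
  unfolding ytot_def trip_prod
  by (rule sum_pos) (auto intro!: mult_pos_pos tau_pos)

lemma ytot_0: "2*p \<le> d \<Longrightarrow> ytot d p 0 = 4 * real (d choose p)^2"
  unfolding ytot_def trip_bool by (simp add: tau_sum)

lemma exp_nat_ln: "0 < u \<Longrightarrow> exp (real n * ln u) = u ^ n"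
  by (simp add: exp_of_nat_mult)

lemma ytot_Sp: assumes "2*p \<le> d" "0 < u" shows "ytot d p (2 * ln u) = Sp d p u"
proof -
  have e1: "exp (2 * ln u * cc d p j a a) = u ^ (2*j+d-2*p)" for j a
  proof -
    have eq: "2 * ln u * cc d p j a a = real (2*j+d-2*p) * ln u"
      using assms by (simp add: cc_def of_nat_diff algebra_simps)
    show ?thesis unfolding eq by (rule exp_nat_ln[OF assms(2)])
  qed
  have e2: "j \<in> {0..p} \<Longrightarrow> exp (2 * ln u * cc d p j a (\<not> a)) = u ^ (2*p-2*j)" for j a
  proof -
    assume j: "j \<in> {0..p}"
    have eq: "2 * ln u * cc d p j a (\<not> a) = real (2*p-2*j) * ln u"
      using j by (simp add: cc_def of_nat_diff algebra_simps)
    show ?thesis unfolding eq by (rule exp_nat_ln[OF assms(2)])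
  qed
  have "ytot d p (2 * ln u) = (\<Sum>j\<in>{0..p}. tau d p j * (2 * u^(2*j+d-2*p) + 2 * u^(2*p-2*j)))"
    unfolding ytot_def sum_bool
    by (rule sum.cong) (use e1 e2[of _ False] e2[of _ True] in \<open>auto simp: algebra_simps\<close>)
  then show ?thesis by (simp add: Sp_def)
qed

lemma zc_zstar: assumes "2*p \<le> d" "j \<in> {0..p}"
  shows "zc p (zstar d p) j a b = tau d p j / (4 * real (d choose p)^2)"
proof (cases "j = 0")
  case False
  then show ?thesis using assms by (simp add: zc_def zstar_def)
next
  case True
  define D where "D = real (d choose p)"
  have D: "0 < D" using Dpos[OF assms(1)] by (simp add: D_def)
  have ts: "tau d p 0 + (\<Sum>i\<in>{1..p}. tau d p i) = D^2"
    using tau_sum[OF assms(1)] by (simp add: sum.atLeast_Suc_atMost D_def)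
  have s: "(\<Sum>i\<in>{1..p}. snd (zstar d p) i a b) = (\<Sum>i\<in>{1..p}. tau d p i) / (4 * D^2)"
    by (simp add: zstar_def sum_divide_distrib D_def)
  have "1/4 - (\<Sum>i\<in>{1..p}. tau d p i) / (4 * D^2) = tau d p 0 / (4 * D^2)"
    using ts D by (simp add: field_simps)
  moreover have "1/2 - 1/4 - (\<Sum>i\<in>{1..p}. tau d p i) / (4 * D^2) = tau d p 0 / (4 * D^2)"
    using ts D by (simp add: field_simps)
  ultimately show ?thesis using True s by (simp add: zc_def D_def zstar_def)
qed

lemma zstar_K: assumes "2*p \<le> d" shows "zstar d p \<in> Kset p"
  using zc_zstar[OF assms] tau_pos[OF _ assms] Dpos[OF assms]
  by (auto simp: Kset_def pts_def zstar_def intro!: divide_nonneg_pos less_imp_le)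

lemma Af_zstar: "Af d p (zstar d p) = real d / 4"
  unfolding Af_def zstar_def by (simp add: algebra_simps)

lemma phi_zstar: assumes "2*p \<le> d" "0 < p"
  shows "phi d p (zstar d p) = real d / 2 * ln (real d / 4) + ln (4 * real (d choose p)^2)"
proof -
  define D where "D = real (d choose p)"
  have D: "0 < D" using Dpos[OF assms(1)] by (simp add: D_def)
  have dpos: "0 < real d" using assms by simp
  have t: "zc p (zstar d p) j a b * ln (tau d p j) - xlogx (zc p (zstar d p) j a b)
      = ln (4 * D^2) * zc p (zstar d p) j a b" if j: "j \<in> {0..p}" for j a b
  proof -
    have tp: "0 < tau d p j" using tau_pos[OF _ assms(1)] j by simp
    have z: "zc p (zstar d p) j a b = tau d p j / (4 * D^2)" using zc_zstar[OF assms(1) j] by (simp add: D_def)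
    have l: "ln (tau d p j / (4 * D^2)) = ln (tau d p j) - ln (4 * D^2)" using tp D by (simp add: ln_div)
    show ?thesis unfolding z xlogx_def using tp D by (simp add: l algebra_simps)
  qed
  have "(\<Sum>j\<in>{0..p}. \<Sum>a\<in>UNIV. \<Sum>b\<in>UNIV. zc p (zstar d p) j a b * ln (tau d p j) - xlogx (zc p (zstar d p) j a b))
      = (\<Sum>j\<in>{0..p}. \<Sum>a\<in>UNIV. \<Sum>b\<in>UNIV. ln (4 * D^2) * zc p (zstar d p) j a b)"
    by (rule sum.cong) (auto simp: t)
  also have "\<dots> = ln (4 * D^2)" by (simp add: sum_distrib_left[symmetric] zc_total)
  finally have S: "(\<Sum>j\<in>{0..p}. \<Sum>a\<in>UNIV. \<Sum>b\<in>UNIV. zc p (zstar d p) j a b * ln (tau d p j) - xlogx (zc p (zstar d p) j a b)) = ln (4 * D^2)" .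
  have B: "Bf d p (zstar d p) = real d / 4" by (simp add: Bf_def Af_zstar)
  show ?thesis unfolding phi_def S B Af_zstar using dpos by (simp add: xlogx_def D_def)
qed

lemma AB_nonneg: assumes "2*p \<le> d" "x \<in> Kset p"
  shows "0 \<le> Af d p x" "0 \<le> Bf d p x"
proof -
  have zpos: "\<And>j a b. j \<in> {0..p} \<Longrightarrow> 0 \<le> zc p x j a b" using assms by (auto simp: Kset_def)
  have c1: "\<And>j a b. j \<in> {0..p} \<Longrightarrow> 0 \<le> cc d p j a b" using assms(1) by (auto simp: cc_def)
  have c2: "\<And>j a b. j \<in> {0..p} \<Longrightarrow> 0 \<le> real d / 2 - cc d p j a b" using assms(1) by (auto simp: cc_def)
  show "0 \<le> Af d p x" unfolding A_eq[symmetric]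
    by (intro sum_nonneg mult_nonneg_nonneg c1 zpos) auto
  have "Bf d p x = (\<Sum>j\<in>{0..p}. \<Sum>a\<in>UNIV. \<Sum>b\<in>UNIV. (real d / 2 - cc d p j a b) * zc p x j a b)"
  proof -
    have "(\<Sum>j\<in>{0..p}. \<Sum>a\<in>UNIV. \<Sum>b\<in>UNIV. (real d / 2 - cc d p j a b) * zc p x j a b)
      = real d / 2 * (\<Sum>j\<in>{0..p}. \<Sum>a\<in>UNIV. \<Sum>b\<in>UNIV. zc p x j a b)
        - (\<Sum>j\<in>{0..p}. \<Sum>a\<in>UNIV. \<Sum>b\<in>UNIV. cc d p j a b * zc p x j a b)"
      by (simp add: left_diff_distrib sum_subtractf sum_distrib_left)
    then show ?thesis unfolding Bf_def A_eq zc_total by simp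
  qed
  also have "\<dots> \<ge> 0" by (intro sum_nonneg mult_nonneg_nonneg c2 zpos) auto
  finally show "0 \<le> Bf d p x" .
qed


lemma interior_zstar: assumes dp: "2*p \<le> d" shows "zstar d p \<in> interior_pt p (Kset p)"
proof -
  define D where "D = real (d choose p)"
  have D1: "1 \<le> D" using dp by (simp add: D_def Suc_le_eq zero_less_binomial_iff)
  define m where "m = 1 / (4 * D)"
  define e where "e = m / (real p + 2)"
  have mpos: "0 < m" using D1 by (simp add: m_def)
  have epos: "0 < e" using mpos by (simp add: e_def)
  have me: "m = (real p + 2) * e" by (simp add: e_def)
  have m4: "m \<le> 1/4" using D1 by (simp add: m_def field_simps)
  have "2 * e \<le> (real p + 2) * e" using epos by (intro mult_right_mono) auto
  then have e8: "e \<le> 1/8" using me m4 by linarith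
  have zs: "zstar d p \<in> pts p" by (simp add: pts_def zstar_def)
  have fz: "fst (zstar d p) = 1/4" by (simp add: zstar_def)
  have mle: "m \<le> zc p (zstar d p) j a b" if j: "j \<in> {0..p}" for j a b
  proof -
    have "D \<le> tau d p j" using tau_ge[OF _ dp] j by (simp add: D_def)
    then have "D / (4 * D^2) \<le> tau d p j / (4 * D^2)" using D1 by (simp add: divide_right_mono)
    moreover have "D / (4 * D^2) = m" using D1 by (simp add: m_def power2_eq_square)
    ultimately show ?thesis using zc_zstar[OF dp j] by (simp add: D_def)
  qed
  have "\<forall>y\<in>pts p. (\<bar>fst y - fst (zstar d p)\<bar> < e \<and>
     (\<forall>j\<in>{1..p}. \<forall>a b. \<bar>snd y j a b - snd (zstar d p) j a b\<bar> < e)) \<longrightarrow> y \<in> Kset p"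
  proof (intro ballI impI)
    fix y assume y: "y \<in> pts p" and H: "\<bar>fst y - fst (zstar d p)\<bar> < e \<and>
     (\<forall>j\<in>{1..p}. \<forall>a b. \<bar>snd y j a b - snd (zstar d p) j a b\<bar> < e)"
    have H1: "\<bar>fst y - 1/4\<bar> < e" using H fz by simp
    have H2: "\<And>j a b. j \<in> {1..p} \<Longrightarrow> \<bar>snd y j a b - snd (zstar d p) j a b\<bar> < e" using H by blast
    have sb: "\<bar>(\<Sum>i\<in>{1..p}. snd y i a b) - (\<Sum>i\<in>{1..p}. snd (zstar d p) i a b)\<bar> \<le> real p * e" for a b
    proof -
      have "\<bar>(\<Sum>i\<in>{1..p}. snd y i a b) - (\<Sum>i\<in>{1..p}. snd (zstar d p) i a b)\<bar>
          = \<bar>\<Sum>i\<in>{1..p}. snd y i a b - snd (zstar d p) i a b\<bar>" by (simp add: sum_subtractf)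
      also have "\<dots> \<le> (\<Sum>i\<in>{1..p}. \<bar>snd y i a b - snd (zstar d p) i a b\<bar>)" by (rule sum_abs)
      also have "\<dots> \<le> (\<Sum>i\<in>{1..p}. e)" by (rule sum_mono) (use H2 in \<open>auto intro: less_imp_le\<close>)
      also have "\<dots> = real p * e" by simp
      finally show ?thesis .
    qed
    have zc_ok: "0 \<le> zc p y j a b" if j: "j \<in> {0..p}" for j a b
    proof (cases "j = 0")
      case False
      then have j1: "j \<in> {1..p}" using j by auto
      have "zc p y j a b = snd y j a b" "zc p (zstar d p) j a b = snd (zstar d p) j a b"
        using False by (simp_all add: zc_def)
      moreover have "snd (zstar d p) j a b - e < snd y j a b" using H2[OF j1, of a b] by (simp add: abs_less_iff)
      moreover have "e \<le> m" using me epos \<open>2 * e \<le> (real p + 2) * e\<close> by linarith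
      ultimately show ?thesis using mle[OF j, of a b] by linarith
    next
      case True
      have m0: "m \<le> zc p (zstar d p) 0 a b" using mle[of 0 a b] by simp
      have "zc p y 0 a b \<ge> zc p (zstar d p) 0 a b - e - real p * e"
        using sb[of a b] H1 fz by (auto simp: zc_def)
      moreover have "(real p + 2) * e - e - real p * e = e" by (simp add: algebra_simps)
      ultimately have "0 \<le> zc p y 0 a b" using m0 me epos by linarith
      then show ?thesis using True by simp
    qed
    show "y \<in> Kset p" unfolding Kset_def using y H1 e8 zc_ok by auto
  qed
  then show ?thesis unfolding interior_pt_def using zs epos by blast
qed

lemma main_gen:
  fixes d p :: nat
  defines "D \<equiv> real (d choose p)"
  assumes dp: "2*p \<le> d" and p0: "0 < p"
    and H2: "\<And>u. 0 < u \<Longrightarrow> 2^d * Sp d p u ^ 2 \<le> 16 * D^4 * (1 + u^2)^d"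
    and H2s: "\<And>u. 0 < u \<Longrightarrow> u \<noteq> 1 \<Longrightarrow> 2^d * Sp d p u ^ 2 < 16 * D^4 * (1 + u^2)^d"
    and H3: "\<exists>u>0. 2^d * Sp d p u ^ 2 < 16 * D^4"
    and H4: "\<exists>u>0. 2^d * Sp d p u ^ 2 < 16 * D^4 * u^(2*d)"
    and x: "x \<in> Kset p" and xne: "x \<noteq> zstar d p"
  shows "phi d p x < phi d p (zstar d p)"
proof -
  have Dp: "0 < D" using Dpos[OF dp] by (simp add: D_def)
  have dpos: "0 < real d" using dp p0 by simp
  define A where "A = Af d p x"
  define B where "B = Bf d p x"
  have AB: "A + B = real d / 2" by (simp add: A_def B_def Bf_def)
  have A0: "0 \<le> A" and B0: "0 \<le> B" using AB_nonneg[OF dp x] by (simp_all add: A_def B_def)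
  define L2 where "L2 = ln (2::real)"
  define Ld where "Ld = ln (real d)"
  define LD where "LD = ln D"
  have l4: "ln (4::real) = 2 * L2" using ln_realpow[of "2::real" 2] by (simp add: L2_def)
  have Pst: "phi d p (zstar d p) = real d * Ld / 2 - real d * L2 + 2 * L2 + 2 * LD"
  proof -
    have h1: "ln (real d / 4) = Ld - 2 * L2" using dpos
      by (simp add: ln_div Ld_def l4)
    have h2: "ln (4 * D^2) = 2 * L2 + 2 * LD" using Dp
      by (simp add: ln_mult l4 LD_def ln_realpow)
    have "phi d p (zstar d p) = real d / 2 * ln (real d / 4) + ln (4 * D^2)"
      using phi_zstar[OF dp p0] by (simp add: D_def)
    also have "\<dots> = real d / 2 * (Ld - 2 * L2) + (2 * L2 + 2 * LD)" by (simp only: h1 h2)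
    also have "\<dots> = real d * Ld / 2 - real d * L2 + 2 * L2 + 2 * LD" by (simp add: algebra_simps)
    finally show ?thesis .
  qed
  have lnd2: "xlogx (real d / 2) = real d * Ld / 2 - real d * L2 / 2"
    using dpos by (simp add: xlogx_def ln_div Ld_def L2_def algebra_simps)
  have lnSq: "ln (2^d * S^2) = real d * L2 + 2 * ln S" if "0 < S" for S :: real
    using that by (simp add: ln_mult ln_realpow L2_def)
  have ln16: "ln (16 * D^4) = 4 * L2 + 4 * LD"
  proof -
    have "ln (16::real) = 4 * L2" using ln_realpow[of "2::real" 4] by (simp add: L2_def)
    then show ?thesis using Dp by (simp add: ln_mult ln_realpow LD_def)
  qed
  have Spos: "0 < Sp d p u" if "0 < u" for u
    using ytot_pos[OF dp] ytot_Sp[OF dp that] by metis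
  consider "A = 0" | "B = 0" | "0 < A \<and> 0 < B" using A0 B0 by linarith
  then show ?thesis
  proof cases
    case 1
    then have Bv: "B = real d / 2" using AB by simp
    obtain u where u: "0 < u" and h: "2^d * Sp d p u ^ 2 < 16 * D^4" using H3 by blast
    have S: "0 < Sp d p u" using Spos[OF u] .
    have b: "phi d p x \<le> xlogx A + xlogx B - 2 * ln u * A + ln (Sp d p u)"
      using phi_bound(1)[OF dp x, of "2 * ln u"] ytot_Sp[OF dp u] by (simp add: A_def B_def)
    have "ln (2^d * Sp d p u ^ 2) < ln (16 * D^4)"
      using h S Dp by (simp add: ln_less_cancel_iff)
    then have "real d * L2 + 2 * ln (Sp d p u) < 4 * L2 + 4 * LD" using lnSq[OF S] ln16 by simp
    then show ?thesis using b Pst lnd2 1 Bv by (simp add: xlogx_def)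
  next
    case 2
    then have Av: "A = real d / 2" using AB by simp
    obtain u where u: "0 < u" and h: "2^d * Sp d p u ^ 2 < 16 * D^4 * u^(2*d)" using H4 by blast
    have S: "0 < Sp d p u" using Spos[OF u] .
    have b: "phi d p x \<le> xlogx A + xlogx B - 2 * ln u * A + ln (Sp d p u)"
      using phi_bound(1)[OF dp x, of "2 * ln u"] ytot_Sp[OF dp u] by (simp add: A_def B_def)
    have "ln (2^d * Sp d p u ^ 2) < ln (16 * D^4 * u^(2*d))"
      using h S Dp u by (simp add: ln_less_cancel_iff)
    moreover have "ln (16 * D^4 * u^(2*d)) = 4 * L2 + 4 * LD + 2 * (real d * ln u)"
      using Dp u ln16 by (simp add: ln_mult ln_realpow)
    ultimately have "real d * L2 + 2 * ln (Sp d p u) < 4 * L2 + 4 * LD + 2 * (real d * ln u)"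
      using lnSq[OF S] by simp
    moreover have "2 * ln u * A = real d * ln u" using Av by simp
    moreover have "xlogx A = real d * Ld / 2 - real d * L2 / 2" unfolding Av by (rule lnd2)
    moreover have "xlogx B = 0" using 2 by (simp add: xlogx_def)
    ultimately show ?thesis using b Pst by linarith
  next
    case 3
    then have Ap: "0 < A" and Bp: "0 < B" by auto
    define u where "u = sqrt (A / B)"
    have u: "0 < u" using Ap Bp by (simp add: u_def)
    have u2: "u^2 = A / B" using Ap Bp by (simp add: u_def)
    have lu: "2 * ln u = ln A - ln B"
    proof -
      have "2 * ln u = ln (u^2)" using u by (simp add: ln_realpow)
      then show ?thesis using u2 Ap Bp by (simp add: ln_div)
    qed
    have S: "0 < Sp d p u" using Spos[OF u] .
    have "xlogx A + xlogx B - 2 * ln u * A = (A + B) * ln B"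
      unfolding lu using Ap Bp by (simp add: xlogx_def algebra_simps)
    then have e1: "xlogx A + xlogx B - 2 * ln u * A = real d / 2 * ln B" unfolding AB .
    have opu: "1 + u^2 = real d / (2 * B)" using u2 Bp AB by (simp add: field_simps)
    have lnopu: "real d * ln (1 + u^2) = real d * Ld - real d * L2 - real d * ln B"
      unfolding opu using dpos Bp by (simp add: ln_div ln_mult Ld_def L2_def algebra_simps)
    have rhs: "ln (16 * D^4 * (1 + u^2)^d) = 4 * L2 + 4 * LD + real d * ln (1 + u^2)"
    proof -
      have opos: "0 < 1 + u^2" by (simp add: add_pos_nonneg)
      have "ln (16 * D^4 * (1 + u^2)^d) = ln (16 * D^4) + ln ((1 + u^2)^d)"
        using Dp opos by (simp add: ln_mult)
      then show ?thesis using ln16 opos by (simp add: ln_realpow)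
    qed
    have pos: "0 < 16 * D^4 * (1 + u^2)^d" using Dp by (simp add: add_pos_nonneg)
    have key: "real d / 2 * ln B + ln (Sp d p u) \<le> phi d p (zstar d p)"
      and keys: "u \<noteq> 1 \<Longrightarrow> real d / 2 * ln B + ln (Sp d p u) < phi d p (zstar d p)"
    proof -
      have "ln (2^d * Sp d p u ^ 2) \<le> ln (16 * D^4 * (1 + u^2)^d)"
        using H2[OF u] S pos by (simp add: ln_le_cancel_iff)
      then show "real d / 2 * ln B + ln (Sp d p u) \<le> phi d p (zstar d p)"
        unfolding lnSq[OF S] rhs lnopu Pst by (simp add: algebra_simps)
      assume "u \<noteq> 1"
      then have "ln (2^d * Sp d p u ^ 2) < ln (16 * D^4 * (1 + u^2)^d)"
        using H2s[OF u] S pos by (simp add: ln_less_cancel_iff)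
      then show "real d / 2 * ln B + ln (Sp d p u) < phi d p (zstar d p)"
        unfolding lnSq[OF S] rhs lnopu Pst by (simp add: algebra_simps)
    qed
    have b: "phi d p x \<le> real d / 2 * ln B + ln (Sp d p u)"
      using phi_bound(1)[OF dp x, of "2 * ln u"] ytot_Sp[OF dp u] e1 by (simp add: A_def B_def)
    show ?thesis
    proof (cases "u = 1")
      case False
      then show ?thesis using b keys by linarith
    next
      case True
      have l0: "2 * ln u = 0" using True by simp
      have ex: "\<exists>j\<in>{0..p}. \<exists>a b. zc p x j a b \<noteq> tau d p j * exp (2 * ln u * cc d p j a b) / ytot d p (2 * ln u)"
      proof (rule ccontr)
        assume "\<not> ?thesis"
        then have allz: "\<And>j a b. j \<in> {0..p} \<Longrightarrow> zc p x j a b = tau d p j / (4 * D^2)"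
          unfolding l0 ytot_0[OF dp] by (simp add: D_def)
        obtain z w where xzw: "x = (z, w)" by fastforce
        have wz: "\<forall>j a b. j \<notin> {1..p} \<longrightarrow> w j a b = 0" using x xzw by (simp add: Kset_def pts_def)
        have "w = snd (zstar d p)"
        proof (intro ext)
          fix j a b show "w j a b = snd (zstar d p) j a b"
          proof (cases "j \<in> {1..p}")
            case True
            then have "zc p x j a b = w j a b" using xzw by (simp add: zc_def)
            then show ?thesis using allz[of j a b] True by (simp add: zstar_def D_def)
          next
            case False
            then have "w j a b = 0" using wz by blast
            moreover have "snd (zstar d p) j a b = 0" using False unfolding zstar_def by auto
            ultimately show ?thesis by simp
          qed
        qed
        moreover have "z = 1/4"
        proof -
          have "z = (\<Sum>j\<in>{0..p}. zc p x j False False)" using zc_sum[of p x False False] xzw by simp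
          also have "\<dots> = (\<Sum>j\<in>{0..p}. tau d p j) / (4 * D^2)"
            using allz by (simp add: sum_divide_distrib)
          also have "\<dots> = 1/4" using tau_sum[OF dp] Dp by (simp add: D_def)
          finally show ?thesis .
        qed
        ultimately have "x = zstar d p" using xzw by (simp add: zstar_def)
        then show False using xne by simp
      qed
      have "phi d p x < real d / 2 * ln B + ln (Sp d p u)"
        using phi_bound(2)[OF dp x ex] ytot_Sp[OF dp u] e1 by (simp add: A_def B_def)
      then show ?thesis using key by linarith
    qed
  qed
qed


lemma quad_pos:
  fixes a b c u :: real
  assumes "0 < a" "0 < c" "b^2 < 4 * a * c"
  shows "0 < a + b * u + c * u^2"
proof -
  have "4 * c * (a + b * u + c * u^2) = (2 * c * u + b)^2 + (4 * a * c - b^2)"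
    by (simp add: algebra_simps power2_eq_square)
  moreover have "0 \<le> (2 * c * u + b)^2" by simp
  ultimately have "0 < 4 * c * (a + b * u + c * u^2)" using assms(3) by linarith
  then show ?thesis using assms(2) by (simp add: zero_less_mult_iff)
qed

lemma binom_6_1: "(6 choose 1) = (6::nat)" by (simp add: binomial_fact' fact_reduce)
lemma tau_6_1_0: "tau 6 1 0 = 30" by (simp add: tau_def binomial_fact' fact_reduce)
lemma tau_6_1_1: "tau 6 1 1 = 6" by (simp add: tau_def binomial_fact' fact_reduce)
lemma Sp_6_1: "Sp 6 1 u = (12 + 60 * u^2 + 60 * u^4 + 12 * u^6)"
proof -
  have s: "{0..1::nat} = {0,1}" by auto
  show ?thesis unfolding Sp_def s by (simp add: tau_6_1_0 tau_6_1_0[simplified] tau_6_1_1 tau_6_1_1[simplified] algebra_simps power2_eq_square)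
qed
lemma H3_6_1: "2^6 * Sp 6 1 (1/10) ^ 2 < 16 * real (6 choose 1)^4" unfolding Sp_6_1 binom_6_1 by (simp add: power_divide)
lemma H4_6_1: "2^6 * Sp 6 1 10 ^ 2 < 16 * real (6 choose 1)^4 * 10^(2*6)" unfolding Sp_6_1 binom_6_1 by simp
lemma R_6_1: "0 < u \<Longrightarrow> 0 < (11520 + 23040 * u + 66816 * u^2 + 110592 * u^3 + 142848 * u^4 + 175104 * u^5 + 142848 * u^6 + 110592 * u^7 + 66816 * u^8 + 23040 * u^9 + 11520 * u^10)" for u :: real
  proof -
  assume u: "0 < u"
  show ?thesis by (intro add_pos_pos mult_pos_pos zero_less_power u zero_less_numeral)
qed
lemma H2_6_1: assumes u: "0 < u" shows "2^6 * Sp 6 1 u ^ 2 \<le> 16 * real (6 choose 1)^4 * (1 + u^2)^6" and "u \<noteq> 1 \<Longrightarrow> 2^6 * Sp 6 1 u ^ 2 < 16 * real (6 choose 1)^4 * (1 + u^2)^6"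
proof -
  have e: "16 * 6^4 * (1 + u^2)^6 - 2^6 * (12 + 60 * u^2 + 60 * u^4 + 12 * u^6)^2 = (u - 1)^2 * (11520 + 23040 * u + 66816 * u^2 + 110592 * u^3 + 142848 * u^4 + 175104 * u^5 + 142848 * u^6 + 110592 * u^7 + 66816 * u^8 + 23040 * u^9 + 11520 * u^10)" by algebra
  have r: "0 < (11520 + 23040 * u + 66816 * u^2 + 110592 * u^3 + 142848 * u^4 + 175104 * u^5 + 142848 * u^6 + 110592 * u^7 + 66816 * u^8 + 23040 * u^9 + 11520 * u^10)" by (rule R_6_1[OF u])
  have "0 \<le> (u - 1)^2 * (11520 + 23040 * u + 66816 * u^2 + 110592 * u^3 + 142848 * u^4 + 175104 * u^5 + 142848 * u^6 + 110592 * u^7 + 66816 * u^8 + 23040 * u^9 + 11520 * u^10)" using r by simp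
  then show "2^6 * Sp 6 1 u ^ 2 \<le> 16 * real (6 choose 1)^4 * (1 + u^2)^6" unfolding Sp_6_1 binom_6_1 using e by (simp only: of_nat_numeral; linarith)
  assume "u \<noteq> 1"
  then have "0 < (u - 1)^2 * (11520 + 23040 * u + 66816 * u^2 + 110592 * u^3 + 142848 * u^4 + 175104 * u^5 + 142848 * u^6 + 110592 * u^7 + 66816 * u^8 + 23040 * u^9 + 11520 * u^10)" using r by simp
  then show "2^6 * Sp 6 1 u ^ 2 < 16 * real (6 choose 1)^4 * (1 + u^2)^6" unfolding Sp_6_1 binom_6_1 using e by (simp only: of_nat_numeral; linarith)
qed
lemma case_6_1: "zstar 6 1 \<in> Kset 1
         \<and> (\<forall>x\<in>Kset 1. x \<noteq> zstar 6 1 \<longrightarrow> phi 6 1 x < phi 6 1 (zstar 6 1))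
         \<and> zstar 6 1 \<in> interior_pt 1 (Kset 1)"
proof -
  have dp: "2 * 1 \<le> (6::nat)" by simp
  have p0: "0 < (1::nat)" by simp
  have h3: "\<exists>u>0. 2^6 * Sp 6 1 u ^ 2 < 16 * real (6 choose 1)^4"
    using H3_6_1 by (intro exI[of _ "1/10"]) simp
  have h4: "\<exists>u>0. 2^6 * Sp 6 1 u ^ 2 < 16 * real (6 choose 1)^4 * u^(2*6)"
    using H4_6_1 by (intro exI[of _ "10"]) simp
  have M: "\<forall>x\<in>Kset 1. x \<noteq> zstar 6 1 \<longrightarrow> phi 6 1 x < phi 6 1 (zstar 6 1)"
    using main_gen[OF dp p0 H2_6_1(1) H2_6_1(2) h3 h4] by blast
  show ?thesis using zstar_K[OF dp] interior_zstar[OF dp] M by blast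
qed

lemma binom_10_2: "(10 choose 2) = (45::nat)" by (simp add: binomial_fact' fact_reduce)
lemma tau_10_2_0: "tau 10 2 0 = 1260" by (simp add: tau_def binomial_fact' fact_reduce)
lemma tau_10_2_1: "tau 10 2 1 = 720" by (simp add: tau_def binomial_fact' fact_reduce)
lemma tau_10_2_2: "tau 10 2 2 = 45" by (simp add: tau_def binomial_fact' fact_reduce)
lemma Sp_10_2: "Sp 10 2 u = (90 + 1440 * u^2 + 2520 * u^4 + 2520 * u^6 + 1440 * u^8 + 90 * u^10)"
proof -
  have s: "{0..2::nat} = {0,1,2}" by auto
  show ?thesis unfolding Sp_def s by (simp add: tau_10_2_0 tau_10_2_0[simplified] tau_10_2_1 tau_10_2_1[simplified] tau_10_2_2 tau_10_2_2[simplified] algebra_simps power2_eq_square)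
qed
lemma H3_10_2: "2^10 * Sp 10 2 (1/10) ^ 2 < 16 * real (10 choose 2)^4" unfolding Sp_10_2 binom_10_2 by (simp add: power_divide)
lemma H4_10_2: "2^10 * Sp 10 2 10 ^ 2 < 16 * real (10 choose 2)^4 * 10^(2*10)" unfolding Sp_10_2 binom_10_2 by simp
lemma R_10_2: "0 < u \<Longrightarrow> 0 < (57315600 + 114631200 * u + 562626000 * u^2 + 1010620800 * u^3 + 1823212800 * u^4 + 2635804800 * u^5 + 3425328000 * u^6 + 4214851200 * u^7 + 4582461600 * u^8 + 4950072000 * u^9 + 4582461600 * u^10 + 4214851200 * u^11 + 3425328000 * u^12 + 2635804800 * u^13 + 1823212800 * u^14 + 1010620800 * u^15 + 562626000 * u^16 + 114631200 * u^17 + 57315600 * u^18)" for u :: real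
  proof -
  assume u: "0 < u"
  show ?thesis by (intro add_pos_pos mult_pos_pos zero_less_power u zero_less_numeral)
qed
lemma H2_10_2: assumes u: "0 < u" shows "2^10 * Sp 10 2 u ^ 2 \<le> 16 * real (10 choose 2)^4 * (1 + u^2)^10" and "u \<noteq> 1 \<Longrightarrow> 2^10 * Sp 10 2 u ^ 2 < 16 * real (10 choose 2)^4 * (1 + u^2)^10"
proof -
  have e: "16 * 45^4 * (1 + u^2)^10 - 2^10 * (90 + 1440 * u^2 + 2520 * u^4 + 2520 * u^6 + 1440 * u^8 + 90 * u^10)^2 = (u - 1)^2 * (57315600 + 114631200 * u + 562626000 * u^2 + 1010620800 * u^3 + 1823212800 * u^4 + 2635804800 * u^5 + 3425328000 * u^6 + 4214851200 * u^7 + 4582461600 * u^8 + 4950072000 * u^9 + 4582461600 * u^10 + 4214851200 * u^11 + 3425328000 * u^12 + 2635804800 * u^13 + 1823212800 * u^14 + 1010620800 * u^15 + 562626000 * u^16 + 114631200 * u^17 + 57315600 * u^18)" by algebra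
  have r: "0 < (57315600 + 114631200 * u + 562626000 * u^2 + 1010620800 * u^3 + 1823212800 * u^4 + 2635804800 * u^5 + 3425328000 * u^6 + 4214851200 * u^7 + 4582461600 * u^8 + 4950072000 * u^9 + 4582461600 * u^10 + 4214851200 * u^11 + 3425328000 * u^12 + 2635804800 * u^13 + 1823212800 * u^14 + 1010620800 * u^15 + 562626000 * u^16 + 114631200 * u^17 + 57315600 * u^18)" by (rule R_10_2[OF u])
  have "0 \<le> (u - 1)^2 * (57315600 + 114631200 * u + 562626000 * u^2 + 1010620800 * u^3 + 1823212800 * u^4 + 2635804800 * u^5 + 3425328000 * u^6 + 4214851200 * u^7 + 4582461600 * u^8 + 4950072000 * u^9 + 4582461600 * u^10 + 4214851200 * u^11 + 3425328000 * u^12 + 2635804800 * u^13 + 1823212800 * u^14 + 1010620800 * u^15 + 562626000 * u^16 + 114631200 * u^17 + 57315600 * u^18)" using r by simp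
  then show "2^10 * Sp 10 2 u ^ 2 \<le> 16 * real (10 choose 2)^4 * (1 + u^2)^10" unfolding Sp_10_2 binom_10_2 using e by (simp only: of_nat_numeral; linarith)
  assume "u \<noteq> 1"
  then have "0 < (u - 1)^2 * (57315600 + 114631200 * u + 562626000 * u^2 + 1010620800 * u^3 + 1823212800 * u^4 + 2635804800 * u^5 + 3425328000 * u^6 + 4214851200 * u^7 + 4582461600 * u^8 + 4950072000 * u^9 + 4582461600 * u^10 + 4214851200 * u^11 + 3425328000 * u^12 + 2635804800 * u^13 + 1823212800 * u^14 + 1010620800 * u^15 + 562626000 * u^16 + 114631200 * u^17 + 57315600 * u^18)" using r by simp
  then show "2^10 * Sp 10 2 u ^ 2 < 16 * real (10 choose 2)^4 * (1 + u^2)^10" unfolding Sp_10_2 binom_10_2 using e by (simp only: of_nat_numeral; linarith)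
qed
lemma case_10_2: "zstar 10 2 \<in> Kset 2
         \<and> (\<forall>x\<in>Kset 2. x \<noteq> zstar 10 2 \<longrightarrow> phi 10 2 x < phi 10 2 (zstar 10 2))
         \<and> zstar 10 2 \<in> interior_pt 2 (Kset 2)"
proof -
  have dp: "2 * 2 \<le> (10::nat)" by simp
  have p0: "0 < (2::nat)" by simp
  have h3: "\<exists>u>0. 2^10 * Sp 10 2 u ^ 2 < 16 * real (10 choose 2)^4"
    using H3_10_2 by (intro exI[of _ "1/10"]) simp
  have h4: "\<exists>u>0. 2^10 * Sp 10 2 u ^ 2 < 16 * real (10 choose 2)^4 * u^(2*10)"
    using H4_10_2 by (intro exI[of _ "10"]) simp
  have M: "\<forall>x\<in>Kset 2. x \<noteq> zstar 10 2 \<longrightarrow> phi 10 2 x < phi 10 2 (zstar 10 2)"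
    using main_gen[OF dp p0 H2_10_2(1) H2_10_2(2) h3 h4] by blast
  show ?thesis using zstar_K[OF dp] interior_zstar[OF dp] M by blast
qed

lemma binom_13_3: "(13 choose 3) = (286::nat)" by (simp add: binomial_fact' fact_reduce)
lemma tau_13_3_0: "tau 13 3 0 = 34320" by (simp add: tau_def binomial_fact' fact_reduce)
lemma tau_13_3_1: "tau 13 3 1 = 38610" by (simp add: tau_def binomial_fact' fact_reduce)
lemma tau_13_3_2: "tau 13 3 2 = 8580" by (simp add: tau_def binomial_fact' fact_reduce)
lemma tau_13_3_3: "tau 13 3 3 = 286" by (simp add: tau_def binomial_fact' fact_reduce)
lemma Sp_13_3: "Sp 13 3 u = (572 + 17160 * u^2 + 77220 * u^4 + 68640 * u^6 + 68640 * u^7 + 77220 * u^9 + 17160 * u^11 + 572 * u^13)"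
proof -
  have s: "{0..3::nat} = {0,1,2,3}" by auto
  show ?thesis unfolding Sp_def s by (simp add: tau_13_3_0 tau_13_3_0[simplified] tau_13_3_1 tau_13_3_1[simplified] tau_13_3_2 tau_13_3_2[simplified] tau_13_3_3 tau_13_3_3[simplified] algebra_simps power2_eq_square)
qed
lemma H3_13_3: "2^13 * Sp 13 3 (1/10) ^ 2 < 16 * real (13 choose 3)^4" unfolding Sp_13_3 binom_13_3 by (simp add: power_divide)
lemma H4_13_3: "2^13 * Sp 13 3 10 ^ 2 < 16 * real (13 choose 3)^4 * 10^(2*13)" unfolding Sp_13_3 binom_13_3 by simp
lemma R_13_3: "0 < u \<Longrightarrow> 0 < (104369078528 + 208738157056 * u + 1543931564032 * u^2 + 2879124971008 * u^3 + 9428228372992 * u^4 + 15977331774976 * u^5 + 30788925280256 * u^6 + 44957248866816 * u^7 + 67519464886016 * u^8 + 70059904685056 * u^9 + 123531444461568 * u^10 + 68290367974400 * u^11 + 158149815036928 * u^12 + 68290367974400 * u^13 + 123531444461568 * u^14 + 70059904685056 * u^15 + 67519464886016 * u^16 + 44957248866816 * u^17 + 30788925280256 * u^18 + 15977331774976 * u^19 + 9428228372992 * u^20 + 2879124971008 * u^21 + 1543931564032 * u^22 + 208738157056 * u^23 + 104369078528 * u^24)" for u :: real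
  proof -
  assume u: "0 < u"
  show ?thesis by (intro add_pos_pos mult_pos_pos zero_less_power u zero_less_numeral)
qed
lemma H2_13_3: assumes u: "0 < u" shows "2^13 * Sp 13 3 u ^ 2 \<le> 16 * real (13 choose 3)^4 * (1 + u^2)^13" and "u \<noteq> 1 \<Longrightarrow> 2^13 * Sp 13 3 u ^ 2 < 16 * real (13 choose 3)^4 * (1 + u^2)^13"
proof -
  have e: "16 * 286^4 * (1 + u^2)^13 - 2^13 * (572 + 17160 * u^2 + 77220 * u^4 + 68640 * u^6 + 68640 * u^7 + 77220 * u^9 + 17160 * u^11 + 572 * u^13)^2 = (u - 1)^2 * (104369078528 + 208738157056 * u + 1543931564032 * u^2 + 2879124971008 * u^3 + 9428228372992 * u^4 + 15977331774976 * u^5 + 30788925280256 * u^6 + 44957248866816 * u^7 + 67519464886016 * u^8 + 70059904685056 * u^9 + 123531444461568 * u^10 + 68290367974400 * u^11 + 158149815036928 * u^12 + 68290367974400 * u^13 + 123531444461568 * u^14 + 70059904685056 * u^15 + 67519464886016 * u^16 + 44957248866816 * u^17 + 30788925280256 * u^18 + 15977331774976 * u^19 + 9428228372992 * u^20 + 2879124971008 * u^21 + 1543931564032 * u^22 + 208738157056 * u^23 + 104369078528 * u^24)" by algebra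
  have r: "0 < (104369078528 + 208738157056 * u + 1543931564032 * u^2 + 2879124971008 * u^3 + 9428228372992 * u^4 + 15977331774976 * u^5 + 30788925280256 * u^6 + 44957248866816 * u^7 + 67519464886016 * u^8 + 70059904685056 * u^9 + 123531444461568 * u^10 + 68290367974400 * u^11 + 158149815036928 * u^12 + 68290367974400 * u^13 + 123531444461568 * u^14 + 70059904685056 * u^15 + 67519464886016 * u^16 + 44957248866816 * u^17 + 30788925280256 * u^18 + 15977331774976 * u^19 + 9428228372992 * u^20 + 2879124971008 * u^21 + 1543931564032 * u^22 + 208738157056 * u^23 + 104369078528 * u^24)" by (rule R_13_3[OF u])
  have "0 \<le> (u - 1)^2 * (104369078528 + 208738157056 * u + 1543931564032 * u^2 + 2879124971008 * u^3 + 9428228372992 * u^4 + 15977331774976 * u^5 + 30788925280256 * u^6 + 44957248866816 * u^7 + 67519464886016 * u^8 + 70059904685056 * u^9 + 123531444461568 * u^10 + 68290367974400 * u^11 + 158149815036928 * u^12 + 68290367974400 * u^13 + 123531444461568 * u^14 + 70059904685056 * u^15 + 67519464886016 * u^16 + 44957248866816 * u^17 + 30788925280256 * u^18 + 15977331774976 * u^19 + 9428228372992 * u^20 + 2879124971008 * u^21 + 1543931564032 * u^22 + 208738157056 * u^23 + 104369078528 * u^24)" using r by simp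
  then show "2^13 * Sp 13 3 u ^ 2 \<le> 16 * real (13 choose 3)^4 * (1 + u^2)^13" unfolding Sp_13_3 binom_13_3 using e by (simp only: of_nat_numeral; linarith)
  assume "u \<noteq> 1"
  then have "0 < (u - 1)^2 * (104369078528 + 208738157056 * u + 1543931564032 * u^2 + 2879124971008 * u^3 + 9428228372992 * u^4 + 15977331774976 * u^5 + 30788925280256 * u^6 + 44957248866816 * u^7 + 67519464886016 * u^8 + 70059904685056 * u^9 + 123531444461568 * u^10 + 68290367974400 * u^11 + 158149815036928 * u^12 + 68290367974400 * u^13 + 123531444461568 * u^14 + 70059904685056 * u^15 + 67519464886016 * u^16 + 44957248866816 * u^17 + 30788925280256 * u^18 + 15977331774976 * u^19 + 9428228372992 * u^20 + 2879124971008 * u^21 + 1543931564032 * u^22 + 208738157056 * u^23 + 104369078528 * u^24)" using r by simp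
  then show "2^13 * Sp 13 3 u ^ 2 < 16 * real (13 choose 3)^4 * (1 + u^2)^13" unfolding Sp_13_3 binom_13_3 using e by (simp only: of_nat_numeral; linarith)
qed
lemma case_13_3: "zstar 13 3 \<in> Kset 3
         \<and> (\<forall>x\<in>Kset 3. x \<noteq> zstar 13 3 \<longrightarrow> phi 13 3 x < phi 13 3 (zstar 13 3))
         \<and> zstar 13 3 \<in> interior_pt 3 (Kset 3)"
proof -
  have dp: "2 * 3 \<le> (13::nat)" by simp
  have p0: "0 < (3::nat)" by simp
  have h3: "\<exists>u>0. 2^13 * Sp 13 3 u ^ 2 < 16 * real (13 choose 3)^4"
    using H3_13_3 by (intro exI[of _ "1/10"]) simp
  have h4: "\<exists>u>0. 2^13 * Sp 13 3 u ^ 2 < 16 * real (13 choose 3)^4 * u^(2*13)"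
    using H4_13_3 by (intro exI[of _ "10"]) simp
  have M: "\<forall>x\<in>Kset 3. x \<noteq> zstar 13 3 \<longrightarrow> phi 13 3 x < phi 13 3 (zstar 13 3)"
    using main_gen[OF dp p0 H2_13_3(1) H2_13_3(2) h3 h4] by blast
  show ?thesis using zstar_K[OF dp] interior_zstar[OF dp] M by blast
qed

lemma binom_14_3: "(14 choose 3) = (364::nat)" by (simp add: binomial_fact' fact_reduce)
lemma tau_14_3_0: "tau 14 3 0 = 60060" by (simp add: tau_def binomial_fact' fact_reduce)
lemma tau_14_3_1: "tau 14 3 1 = 60060" by (simp add: tau_def binomial_fact' fact_reduce)
lemma tau_14_3_2: "tau 14 3 2 = 12012" by (simp add: tau_def binomial_fact' fact_reduce)
lemma tau_14_3_3: "tau 14 3 3 = 364" by (simp add: tau_def binomial_fact' fact_reduce)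
lemma Sp_14_3: "Sp 14 3 u = (728 + 24024 * u^2 + 120120 * u^4 + 120120 * u^6 + 120120 * u^8 + 120120 * u^10 + 24024 * u^12 + 728 * u^14)"
proof -
  have s: "{0..3::nat} = {0,1,2,3}" by auto
  show ?thesis unfolding Sp_def s by (simp add: tau_14_3_0 tau_14_3_0[simplified] tau_14_3_1 tau_14_3_1[simplified] tau_14_3_2 tau_14_3_2[simplified] tau_14_3_3 tau_14_3_3[simplified] algebra_simps power2_eq_square)
qed
lemma H3_14_3: "2^14 * Sp 14 3 (1/10) ^ 2 < 16 * real (14 choose 3)^4" unfolding Sp_14_3 binom_14_3 by (simp add: power_divide)
lemma H4_14_3: "2^14 * Sp 14 3 10 ^ 2 < 16 * real (14 choose 3)^4 * 10^(2*14)" unfolding Sp_14_3 binom_14_3 by simp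
lemma H2_14_3: assumes u: "0 < u" shows "2^14 * Sp 14 3 u ^ 2 \<le> 16 * real (14 choose 3)^4 * (1 + u^2)^14" and "u \<noteq> 1 \<Longrightarrow> 2^14 * Sp 14 3 u ^ 2 < 16 * real (14 choose 3)^4 * (1 + u^2)^14"
proof -
  define X where "X = 2^7 * Sp 14 3 u"
  define Y where "Y = 4 * real (14 choose 3)^2 * (1 + u^2)^7"
  have e: "4 * 364^2 * (1 + u^2)^7 - 2^7 * (728 + 24024 * u^2 + 120120 * u^4 + 120120 * u^6 + 120120 * u^8 + 120120 * u^10 + 24024 * u^12 + 728 * u^14) = (u^2 - 1)^2 * (1 + u^2) * (436800 * (u^4 - 1)^2 + 1071616 * u^2 * (u^2 - 1)^2 + 279552 * u^4)" by algebra
  have i: "0 < 436800 * (u^4 - 1)^2 + 1071616 * u^2 * (u^2 - 1)^2 + 279552 * u^4" using u by (intro add_nonneg_pos) simp_all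
  have o: "0 < 1 + u^2" by (simp add: add_pos_nonneg)
  have X0: "0 \<le> X" unfolding X_def Sp_14_3 using u by simp
  have nn: "0 \<le> (u^2 - 1)^2 * (1 + u^2) * (436800 * (u^4 - 1)^2 + 1071616 * u^2 * (u^2 - 1)^2 + 279552 * u^4)" using i o by simp
  have XY: "X \<le> Y" unfolding X_def Y_def Sp_14_3 binom_14_3 using e nn by (simp only: of_nat_numeral; linarith)
  have sq: "2^14 * Sp 14 3 u ^ 2 = X^2" "16 * real (14 choose 3)^4 * (1 + u^2)^14 = Y^2" unfolding X_def Y_def by (simp_all add: power_mult_distrib power_mult[symmetric])
  show "2^14 * Sp 14 3 u ^ 2 \<le> 16 * real (14 choose 3)^4 * (1 + u^2)^14" unfolding sq by (rule power_mono[OF XY X0])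
  assume "u \<noteq> 1"
  then have "u^2 \<noteq> 1" using u by (auto simp: power2_eq_1_iff)
  then have "0 < (u^2 - 1)^2 * (1 + u^2) * (436800 * (u^4 - 1)^2 + 1071616 * u^2 * (u^2 - 1)^2 + 279552 * u^4)" using i o by simp
  then have XY2: "X < Y" unfolding X_def Y_def Sp_14_3 binom_14_3 using e by (simp only: of_nat_numeral; linarith)
  show "2^14 * Sp 14 3 u ^ 2 < 16 * real (14 choose 3)^4 * (1 + u^2)^14" unfolding sq by (rule power_strict_mono[OF XY2 X0]) simp
qed
lemma case_14_3: "zstar 14 3 \<in> Kset 3
         \<and> (\<forall>x\<in>Kset 3. x \<noteq> zstar 14 3 \<longrightarrow> phi 14 3 x < phi 14 3 (zstar 14 3))
         \<and> zstar 14 3 \<in> interior_pt 3 (Kset 3)"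
proof -
  have dp: "2 * 3 \<le> (14::nat)" by simp
  have p0: "0 < (3::nat)" by simp
  have h3: "\<exists>u>0. 2^14 * Sp 14 3 u ^ 2 < 16 * real (14 choose 3)^4"
    using H3_14_3 by (intro exI[of _ "1/10"]) simp
  have h4: "\<exists>u>0. 2^14 * Sp 14 3 u ^ 2 < 16 * real (14 choose 3)^4 * u^(2*14)"
    using H4_14_3 by (intro exI[of _ "10"]) simp
  have M: "\<forall>x\<in>Kset 3. x \<noteq> zstar 14 3 \<longrightarrow> phi 14 3 x < phi 14 3 (zstar 14 3)"
    using main_gen[OF dp p0 H2_14_3(1) H2_14_3(2) h3 h4] by blast
  show ?thesis using zstar_K[OF dp] interior_zstar[OF dp] M by blast
qed

lemma binom_17_4: "(17 choose 4) = (2380::nat)" by (simp add: binomial_fact' fact_reduce)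
lemma tau_17_4_0: "tau 17 4 0 = 1701700" by (simp add: tau_def binomial_fact' fact_reduce)
lemma tau_17_4_1: "tau 17 4 1 = 2722720" by (simp add: tau_def binomial_fact' fact_reduce)
lemma tau_17_4_2: "tau 17 4 2 = 1113840" by (simp add: tau_def binomial_fact' fact_reduce)
lemma tau_17_4_3: "tau 17 4 3 = 123760" by (simp add: tau_def binomial_fact' fact_reduce)
lemma tau_17_4_4: "tau 17 4 4 = 2380" by (simp add: tau_def binomial_fact' fact_reduce)
lemma Sp_17_4: "Sp 17 4 u = (4760 + 247520 * u^2 + 2227680 * u^4 + 5445440 * u^6 + 3403400 * u^8 + 3403400 * u^9 + 5445440 * u^11 + 2227680 * u^13 + 247520 * u^15 + 4760 * u^17)"
proof -
  have s: "{0..4::nat} = {0,1,2,3,4}" by auto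
  show ?thesis unfolding Sp_def s by (simp add: tau_17_4_0 tau_17_4_0[simplified] tau_17_4_1 tau_17_4_1[simplified] tau_17_4_2 tau_17_4_2[simplified] tau_17_4_3 tau_17_4_3[simplified] tau_17_4_4 tau_17_4_4[simplified] algebra_simps power2_eq_square)
qed
lemma H3_17_4: "2^17 * Sp 17 4 (1/10) ^ 2 < 16 * real (17 choose 4)^4" unfolding Sp_17_4 binom_17_4 by (simp add: power_divide)
lemma H4_17_4: "2^17 * Sp 17 4 10 ^ 2 < 16 * real (17 choose 4)^4 * 10^(2*17)" unfolding Sp_17_4 binom_17_4 by simp
lemma R_17_4: "0 < u \<Longrightarrow> 0 < (510397060812800 + 1020794121625600 * u + 9949570621849600 * u^2 + 18878347122073600 * u^3 + 86815025469849600 * u^4 + 154751703817625600 * u^5 + 420437998612889600 * u^6 + 686124293408153600 * u^7 + 1165592272884121600 * u^8 + 1640813471325593600 * u^9 + 1891926409401548800 * u^10 + 1915411884028518400 * u^11 + 2418177815858380800 * u^12 + 577338330251468800 * u^13 + 3862139601937612800 * u^14 + -1036220108846899200 * u^15 + 5027143786481868800 * u^16 + -1036220108846899200 * u^17 + 3862139601937612800 * u^18 + 577338330251468800 * u^19 + 2418177815858380800 * u^20 + 1915411884028518400 * u^21 + 1891926409401548800 * u^22 + 1640813471325593600 * u^23 + 1165592272884121600 * u^24 + 686124293408153600 * u^25 + 420437998612889600 * u^26 + 154751703817625600 * u^27 + 86815025469849600 * u^28 + 18878347122073600 * u^29 + 9949570621849600 * u^30 + 1020794121625600 * u^31 + 510397060812800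 * u^32)" for u :: real
proof -
  assume u: "0 < u"
  have e: "(510397060812800 + 1020794121625600 * u + 9949570621849600 * u^2 + 18878347122073600 * u^3 + 86815025469849600 * u^4 + 154751703817625600 * u^5 + 420437998612889600 * u^6 + 686124293408153600 * u^7 + 1165592272884121600 * u^8 + 1640813471325593600 * u^9 + 1891926409401548800 * u^10 + 1915411884028518400 * u^11 + 2418177815858380800 * u^12 + 577338330251468800 * u^13 + 3862139601937612800 * u^14 + -1036220108846899200 * u^15 + 5027143786481868800 * u^16 + -1036220108846899200 * u^17 + 3862139601937612800 * u^18 + 577338330251468800 * u^19 + 2418177815858380800 * u^20 + 1915411884028518400 * u^21 + 1891926409401548800 * u^22 + 1640813471325593600 * u^23 + 1165592272884121600 * u^24 + 686124293408153600 * u^25 + 420437998612889600 * u^26 + 154751703817625600 * u^27 + 86815025469849600 * u^28 + 18878347122073600 * u^29 + 9949570621849600 * u^30 + 1020794121625600 * u^31 + 510397060812800 * u^32) = (510397060812800 + 1020794121625600 * u + 9949570621849600 * u^2 + 18878347122073600 * u^3 + 86815025469849600 * u^4 + 154751703817625600 * u^5 + 420437998612889600 * u^6 + 686124293408153600 * u^7 + 1165592272884121600 * u^8 + 1640813471325593600 * u^9 + 1891926409401548800 * u^10 + 1915411884028518400 * u^11 + 2418177815858380800 * u^12 + 577338330251468800 * u^13 + 577338330251468800 * u^19 + 2418177815858380800 * u^20 + 1915411884028518400 * u^21 + 1891926409401548800 * u^22 + 1640813471325593600 * u^23 + 1165592272884121600 * u^24 + 686124293408153600 * u^25 + 420437998612889600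 * u^26 + 154751703817625600 * u^27 + 86815025469849600 * u^28 + 18878347122073600 * u^29 + 9949570621849600 * u^30 + 1020794121625600 * u^31 + 510397060812800 * u^32) + u^14 * (3862139601937612800 + (-1036220108846899200) * u + 2513571893240934400 * u^2) + u^16 * (2513571893240934400 + (-1036220108846899200) * u + 3862139601937612800 * u^2)" by algebra
  have q1: "0 < 3862139601937612800 + (-1036220108846899200) * u + 2513571893240934400 * u^2" by (rule quad_pos) simp_all
  have q2: "0 < 2513571893240934400 + (-1036220108846899200) * u + 3862139601937612800 * u^2" by (rule quad_pos) simp_all
  have r: "0 < (510397060812800 + 1020794121625600 * u + 9949570621849600 * u^2 + 18878347122073600 * u^3 + 86815025469849600 * u^4 + 154751703817625600 * u^5 + 420437998612889600 * u^6 + 686124293408153600 * u^7 + 1165592272884121600 * u^8 + 1640813471325593600 * u^9 + 1891926409401548800 * u^10 + 1915411884028518400 * u^11 + 2418177815858380800 * u^12 + 577338330251468800 * u^13 + 577338330251468800 * u^19 + 2418177815858380800 * u^20 + 1915411884028518400 * u^21 + 1891926409401548800 * u^22 + 1640813471325593600 * u^23 + 1165592272884121600 * u^24 + 686124293408153600 * u^25 + 420437998612889600 * u^26 + 154751703817625600 * u^27 + 86815025469849600 * u^28 + 18878347122073600 * u^29 + 9949570621849600 * u^30 + 1020794121625600 * u^31 + 510397060812800 * u^32)" by (intro add_pos_pos mult_pos_pos zero_less_power u zero_less_numeral)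
  have t1: "0 < u^14 * (3862139601937612800 + (-1036220108846899200) * u + 2513571893240934400 * u^2)" by (intro mult_pos_pos zero_less_power u q1)
  have t2: "0 < u^16 * (2513571893240934400 + (-1036220108846899200) * u + 3862139601937612800 * u^2)" by (intro mult_pos_pos zero_less_power u q2)
  show ?thesis unfolding e by (rule add_pos_pos[OF add_pos_pos[OF r t1] t2])
qed
lemma H2_17_4: assumes u: "0 < u" shows "2^17 * Sp 17 4 u ^ 2 \<le> 16 * real (17 choose 4)^4 * (1 + u^2)^17" and "u \<noteq> 1 \<Longrightarrow> 2^17 * Sp 17 4 u ^ 2 < 16 * real (17 choose 4)^4 * (1 + u^2)^17"
proof -
  have e: "16 * 2380^4 * (1 + u^2)^17 - 2^17 * (4760 + 247520 * u^2 + 2227680 * u^4 + 5445440 * u^6 + 3403400 * u^8 + 3403400 * u^9 + 5445440 * u^11 + 2227680 * u^13 + 247520 * u^15 + 4760 * u^17)^2 = (u - 1)^2 * (510397060812800 + 1020794121625600 * u + 9949570621849600 * u^2 + 18878347122073600 * u^3 + 86815025469849600 * u^4 + 154751703817625600 * u^5 + 420437998612889600 * u^6 + 686124293408153600 * u^7 + 1165592272884121600 * u^8 + 1640813471325593600 * u^9 + 1891926409401548800 * u^10 + 1915411884028518400 * u^11 + 2418177815858380800 * u^12 + 577338330251468800 * u^13 + 3862139601937612800 * u^14 + -1036220108846899200 * u^15 + 5027143786481868800 * u^16 + -1036220108846899200 * u^17 + 3862139601937612800 * u^18 + 577338330251468800 * u^19 + 2418177815858380800 * u^20 + 1915411884028518400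 * u^21 + 1891926409401548800 * u^22 + 1640813471325593600 * u^23 + 1165592272884121600 * u^24 + 686124293408153600 * u^25 + 420437998612889600 * u^26 + 154751703817625600 * u^27 + 86815025469849600 * u^28 + 18878347122073600 * u^29 + 9949570621849600 * u^30 + 1020794121625600 * u^31 + 510397060812800 * u^32)" by algebra
  have r: "0 < (510397060812800 + 1020794121625600 * u + 9949570621849600 * u^2 + 18878347122073600 * u^3 + 86815025469849600 * u^4 + 154751703817625600 * u^5 + 420437998612889600 * u^6 + 686124293408153600 * u^7 + 1165592272884121600 * u^8 + 1640813471325593600 * u^9 + 1891926409401548800 * u^10 + 1915411884028518400 * u^11 + 2418177815858380800 * u^12 + 577338330251468800 * u^13 + 3862139601937612800 * u^14 + -1036220108846899200 * u^15 + 5027143786481868800 * u^16 + -1036220108846899200 * u^17 + 3862139601937612800 * u^18 + 577338330251468800 * u^19 + 2418177815858380800 * u^20 + 1915411884028518400 * u^21 + 1891926409401548800 * u^22 + 1640813471325593600 * u^23 + 1165592272884121600 * u^24 + 686124293408153600 * u^25 + 420437998612889600 * u^26 + 154751703817625600 * u^27 + 86815025469849600 * u^28 + 18878347122073600 * u^29 + 9949570621849600 * u^30 + 1020794121625600 * u^31 + 510397060812800 * u^32)" by (rule R_17_4[OF u])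
  have "0 \<le> (u - 1)^2 * (510397060812800 + 1020794121625600 * u + 9949570621849600 * u^2 + 18878347122073600 * u^3 + 86815025469849600 * u^4 + 154751703817625600 * u^5 + 420437998612889600 * u^6 + 686124293408153600 * u^7 + 1165592272884121600 * u^8 + 1640813471325593600 * u^9 + 1891926409401548800 * u^10 + 1915411884028518400 * u^11 + 2418177815858380800 * u^12 + 577338330251468800 * u^13 + 3862139601937612800 * u^14 + -1036220108846899200 * u^15 + 5027143786481868800 * u^16 + -1036220108846899200 * u^17 + 3862139601937612800 * u^18 + 577338330251468800 * u^19 + 2418177815858380800 * u^20 + 1915411884028518400 * u^21 + 1891926409401548800 * u^22 + 1640813471325593600 * u^23 + 1165592272884121600 * u^24 + 686124293408153600 * u^25 + 420437998612889600 * u^26 + 154751703817625600 * u^27 + 86815025469849600 * u^28 + 18878347122073600 * u^29 + 9949570621849600 * u^30 + 1020794121625600 * u^31 + 510397060812800 * u^32)" using r by simp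
  then show "2^17 * Sp 17 4 u ^ 2 \<le> 16 * real (17 choose 4)^4 * (1 + u^2)^17" unfolding Sp_17_4 binom_17_4 using e by (simp only: of_nat_numeral; linarith)
  assume "u \<noteq> 1"
  then have "0 < (u - 1)^2 * (510397060812800 + 1020794121625600 * u + 9949570621849600 * u^2 + 18878347122073600 * u^3 + 86815025469849600 * u^4 + 154751703817625600 * u^5 + 420437998612889600 * u^6 + 686124293408153600 * u^7 + 1165592272884121600 * u^8 + 1640813471325593600 * u^9 + 1891926409401548800 * u^10 + 1915411884028518400 * u^11 + 2418177815858380800 * u^12 + 577338330251468800 * u^13 + 3862139601937612800 * u^14 + -1036220108846899200 * u^15 + 5027143786481868800 * u^16 + -1036220108846899200 * u^17 + 3862139601937612800 * u^18 + 577338330251468800 * u^19 + 2418177815858380800 * u^20 + 1915411884028518400 * u^21 + 1891926409401548800 * u^22 + 1640813471325593600 * u^23 + 1165592272884121600 * u^24 + 686124293408153600 * u^25 + 420437998612889600 * u^26 + 154751703817625600 * u^27 + 86815025469849600 * u^28 + 18878347122073600 * u^29 + 9949570621849600 * u^30 + 1020794121625600 * u^31 + 510397060812800 * u^32)" using r by simp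
  then show "2^17 * Sp 17 4 u ^ 2 < 16 * real (17 choose 4)^4 * (1 + u^2)^17" unfolding Sp_17_4 binom_17_4 using e by (simp only: of_nat_numeral; linarith)
qed
lemma case_17_4: "zstar 17 4 \<in> Kset 4
         \<and> (\<forall>x\<in>Kset 4. x \<noteq> zstar 17 4 \<longrightarrow> phi 17 4 x < phi 17 4 (zstar 17 4))
         \<and> zstar 17 4 \<in> interior_pt 4 (Kset 4)"
proof -
  have dp: "2 * 4 \<le> (17::nat)" by simp
  have p0: "0 < (4::nat)" by simp
  have h3: "\<exists>u>0. 2^17 * Sp 17 4 u ^ 2 < 16 * real (17 choose 4)^4"
    using H3_17_4 by (intro exI[of _ "1/10"]) simp
  have h4: "\<exists>u>0. 2^17 * Sp 17 4 u ^ 2 < 16 * real (17 choose 4)^4 * u^(2*17)"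
    using H4_17_4 by (intro exI[of _ "10"]) simp
  have M: "\<forall>x\<in>Kset 4. x \<noteq> zstar 17 4 \<longrightarrow> phi 17 4 x < phi 17 4 (zstar 17 4)"
    using main_gen[OF dp p0 H2_17_4(1) H2_17_4(2) h3 h4] by blast
  show ?thesis using zstar_K[OF dp] interior_zstar[OF dp] M by blast
qed


theorem lemma4p4:
  fixes d p :: nat
  assumes "(d, p) \<in> {(6,1), (10,2), (13,3), (14,3), (17,4)}"
  shows "zstar d p \<in> Kset p
         \<and> (\<forall>x\<in>Kset p. x \<noteq> zstar d p \<longrightarrow> phi d p x < phi d p (zstar d p))
         \<and> zstar d p \<in> interior_pt p (Kset p)"
  using assms case_6_1 case_10_2 case_13_3 case_14_3 case_17_4 by auto

end
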